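(* Let $k$ be an algebraically closed field of characteristic $p\ge5$. The singular set of $R^p$ in $\mathbf{A}^3_k$, i.e. the algebraic set defined by the ideal $\langle R^p(e_2),R^p(e_4),R^p(e_6)\rangle\subset k[e_2,e_4,e_6]$, equals $\{e_4^3-e_6^2=0\}$.
   Context: $R = \frac{e_2^2-e_4}{12}\frac{\partial}{\partial e_2} + \frac{e_2e_4-e_6}{3}\frac{\partial}{\partial e_4} + \frac{e_2e_6-e_4^2}{2}\frac{\partial}{\partial e_6}$ is the Ramanujan vector field on $\mathbf{A}^3_k$ with coordinates $(e_2,e_4,e_6)$, and $R^p$ is its $p$-fold composite as a derivation of $k[e_2,e_4,e_6]$. *)

theory Defs
  imports "HOL-Computational_Algebra.Polynomial"
begin

text \<open>The polynomial ring k[e2,e4,e6] is modelled as nested univariate polynomials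
  ((k[e2])[e4])[e6], i.e. the type 'k poly poly poly.\<close>

type_synonym 'k poly3 = "'k poly poly poly"

definition C3 :: "'k::field \<Rightarrow> 'k poly3" where
  "C3 c = [:[:[:c:]:]:]"

definition E2 :: "'k::field poly3" where "E2 = [:[:[:0, 1:]:]:]"
definition E4 :: "'k::field poly3" where "E4 = [:[:0, 1:]:]"
definition E6 :: "'k::field poly3" where "E6 = [:0, 1:]"

definition D2 :: "'k::field poly3 \<Rightarrow> 'k poly3" where
  "D2 f = map_poly (map_poly pderiv) f"
definition D4 :: "'k::field poly3 \<Rightarrow> 'k poly3" where
  "D4 f = map_poly pderiv f"
definition D6 :: "'k::field poly3 \<Rightarrow> 'k poly3" where
  "D6 f = pderiv f"

definition ramanujan :: "'k::field poly3 \<Rightarrow> 'k poly3" where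
  "ramanujan f =
     C3 (inverse 12) * (E2^2 - E4) * D2 f
   + C3 (inverse 3) * (E2 * E4 - E6) * D4 f
   + C3 (inverse 2) * (E2 * E6 - E4^2) * D6 f"

definition eval3 :: "'k::field poly3 \<Rightarrow> 'k \<Rightarrow> 'k \<Rightarrow> 'k \<Rightarrow> 'k" where
  "eval3 f a b c = poly (map_poly (\<lambda>q. poly q b) (map_poly (map_poly (\<lambda>q. poly q a)) f)) c"

definition alg_closed_field :: "'k::field itself \<Rightarrow> bool" where
  "alg_closed_field _ \<longleftrightarrow> (\<forall>q::'k poly. degree q > 0 \<longrightarrow> (\<exists>x. poly q x = 0))"

end

theory Submission
  imports Defs "HOL-Computational_Algebra.Primes"
begin


definition der :: "('a::comm_ring_1 \<Rightarrow> 'a) \<Rightarrow> bool" where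
  "der d \<longleftrightarrow> (\<forall>x y. d (x + y) = d x + d y) \<and> (\<forall>x y. d (x * y) = d x * y + x * d y)"

lemma der_add: "der d \<Longrightarrow> d (x + y) = d x + d y"
  unfolding der_def by blast

lemma der_mult: "der d \<Longrightarrow> d (x * y) = d x * y + x * d y"
  unfolding der_def by blast

lemma der_0: "der d \<Longrightarrow> d 0 = 0"
  using der_add[of d 0 0] by simp

lemma der_uminus: "der d \<Longrightarrow> d (- x) = - d x"
  using der_add[of d x "-x"] der_0[of d] by (simp add: eq_neg_iff_add_eq_0 add.commute)

lemma der_diff: "der d \<Longrightarrow> d (x - y) = d x - d y"
  using der_add[of d x "-y"] der_uminus[of d y] by simp

lemma der_1: "der d \<Longrightarrow> d 1 = 0"
  using der_mult[of d 1 1] by simp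

lemma der_of_nat: "der d \<Longrightarrow> d (of_nat n) = 0"
  by (induction n) (simp_all add: der_0 der_add der_1)

lemma der_numeral: "der d \<Longrightarrow> d (numeral n) = 0"
  using der_of_nat[of d "numeral n"] by simp

lemma der_sum: "der d \<Longrightarrow> d (sum f A) = (\<Sum>a\<in>A. d (f a))"
  by (induction A rule: infinite_finite_induct) (simp_all add: der_0 der_add)

lemma der_cmult: "der d \<Longrightarrow> d c = 0 \<Longrightarrow> d (c * x) = c * d x"
  by (simp add: der_mult)

lemma der_of_nat_mult: "der d \<Longrightarrow> d (of_nat n * x) = of_nat n * d x"
  by (simp add: der_mult der_of_nat)

lemma der_power: "der d \<Longrightarrow> d (x ^ Suc n) = of_nat (Suc n) * x ^ n * d x"
proof (induction n)
  case 0 then show ?case by simp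
next
  case (Suc n)
  have "d (x ^ Suc (Suc n)) = d (x * x ^ Suc n)" by simp
  also have "\<dots> = d x * x ^ Suc n + x * (of_nat (Suc n) * x ^ n * d x)"
    using Suc by (simp add: der_mult)
  also have "\<dots> = of_nat (Suc (Suc n)) * x ^ Suc n * d x"
    by (simp add: algebra_simps)
  finally show ?case .
qed

lemma der_pderiv: "der (pderiv :: 'a::idom poly \<Rightarrow> _)"
  unfolding der_def by (simp add: pderiv_add pderiv_mult algebra_simps)

lemma der_map_poly:
  assumes "der d"
  shows "der (map_poly d)"
proof -
  have d0: "d 0 = 0" using assms by (rule der_0)
  have A: "map_poly d (x + y) = map_poly d x + map_poly d y" for x y
    by (rule poly_eqI) (simp add: coeff_map_poly d0 der_add[OF assms])
  have M: "map_poly d (x * y) = map_poly d x * y + x * map_poly d y" for x y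
  proof (rule poly_eqI)
    fix n
    have "coeff (map_poly d (x * y)) n = d (\<Sum>i\<le>n. coeff x i * coeff y (n - i))"
      by (simp add: coeff_map_poly d0 coeff_mult)
    also have "\<dots> = (\<Sum>i\<le>n. d (coeff x i) * coeff y (n - i) + coeff x i * d (coeff y (n - i)))"
      by (simp add: der_sum[OF assms] der_mult[OF assms])
    also have "\<dots> = coeff (map_poly d x * y + x * map_poly d y) n"
      by (simp add: coeff_mult coeff_map_poly d0 sum.distrib)
    finally show "coeff (map_poly d (x * y)) n = coeff (map_poly d x * y + x * map_poly d y) n" .
  qed
  show ?thesis unfolding der_def using A M by blast
qed

lemma der_lin2:
  assumes "der d1" "der d2"
  shows "der (\<lambda>x. a * d1 x + b * d2 x)"
  unfolding der_def using assms by (simp add: der_add der_mult algebra_simps)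

lemma der_lin1:
  assumes "der d1"
  shows "der (\<lambda>x. a * d1 x)"
  unfolding der_def using assms by (simp add: der_add der_mult algebra_simps)

lemma der_plus:
  assumes "der d1" "der d2"
  shows "der (\<lambda>x. d1 x + d2 x)"
  unfolding der_def using assms by (simp add: der_add der_mult algebra_simps)

lemma der_funpow_add: "der d \<Longrightarrow> (d ^^ n) (x + y) = (d ^^ n) x + (d ^^ n) y"
  by (induction n) (simp_all add: der_add)

lemma der_funpow_0: "der d \<Longrightarrow> (d ^^ n) 0 = 0"
  by (induction n) (simp_all add: der_0)

lemma der_funpow_uminus: "der d \<Longrightarrow> (d ^^ n) (- x) = - (d ^^ n) x"
  by (induction n) (simp_all add: der_uminus)

lemma der_funpow_diff: "der d \<Longrightarrow> (d ^^ n) (x - y) = (d ^^ n) x - (d ^^ n) y"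
  by (induction n) (simp_all add: der_diff)

lemma der_funpow_const: "der d \<Longrightarrow> d c = 0 \<Longrightarrow> (d ^^ n) (c * x) = c * (d ^^ n) x"
  by (induction n) (simp_all add: der_cmult)

lemma der_funpow_of_nat: "der d \<Longrightarrow> (d ^^ n) (of_nat m * x) = of_nat m * (d ^^ n) x"
  by (rule der_funpow_const) (simp_all add: der_of_nat)

lemma der_funpow_kill: "der d \<Longrightarrow> d c = 0 \<Longrightarrow> (d ^^ Suc n) c = 0"
  by (induction n) (simp_all add: der_0)

lemma der_leibniz:
  assumes "der d"
  shows "(d ^^ n) (x * y) = (\<Sum>k\<le>n. of_nat (n choose k) * (d ^^ k) x * (d ^^ (n - k)) y)"
proof (induction n)
  case 0 then show ?case by simp
next
  case (Suc n)
  let ?f = "\<lambda>k. (d ^^ k) x" and ?g = "\<lambda>k. (d ^^ k) y"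
  have "(d ^^ Suc n) (x * y) = d (\<Sum>k\<le>n. of_nat (n choose k) * ?f k * ?g (n - k))"
    using Suc by simp
  also have "\<dots> = (\<Sum>k\<le>n. of_nat (n choose k) * ?f (Suc k) * ?g (n - k))
                 + (\<Sum>k\<le>n. of_nat (n choose k) * ?f k * ?g (Suc (n - k)))"
    by (simp add: der_sum[OF assms] der_mult[OF assms] der_of_nat[OF assms] sum.distrib
        algebra_simps)
  also have "\<dots> = (\<Sum>k\<le>Suc n. of_nat (Suc n choose k) * ?f k * ?g (Suc n - k))"
  proof -
    have s1: "(\<Sum>k\<le>n. of_nat (n choose k) * ?f (Suc k) * ?g (n - k))
        = (\<Sum>k\<le>Suc n. (if k = 0 then 0 else of_nat (n choose (k - 1))) * ?f k * ?g (Suc n - k))"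
      by (subst sum.atMost_Suc_shift) (simp del: sum.atMost_Suc)
    have s2: "(\<Sum>k\<le>n. of_nat (n choose k) * ?f k * ?g (Suc (n - k)))
        = (\<Sum>k\<le>Suc n. of_nat (n choose k) * ?f k * ?g (Suc n - k))"
      by (simp add: Suc_diff_le binomial_eq_0)
    show ?thesis
      unfolding s1 s2 sum.distrib[symmetric]
    proof (rule sum.cong)
      fix k assume "k \<in> {..Suc n}"
      then have k: "k \<le> Suc n" by simp
      show "(if k = 0 then 0 else of_nat (n choose (k - 1))) * ?f k * ?g (Suc n - k)
            + of_nat (n choose k) * ?f k * ?g (Suc n - k)
          = of_nat (Suc n choose k) * ?f k * ?g (Suc n - k)"
      proof (cases k)
        case 0 then show ?thesis by simp
      next
        case (Suc j)
        then show ?thesis by (simp add: algebra_simps)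
      qed
    qed simp
  qed
  finally show ?case .
qed

lemma der_pow_prime:
  assumes "der d" "prime p" "of_nat p = (0::'a::comm_ring_1)"
  shows "(d ^^ p) (x * y) = (d ^^ p) x * y + x * (d ^^ p) (y::'a)"
proof -
  have p0: "p > 0" using assms(2) prime_gt_0_nat by blast
  have "(d ^^ p) (x * y) = (\<Sum>k\<le>p. of_nat (p choose k) * (d ^^ k) x * (d ^^ (p - k)) y)"
    by (rule der_leibniz[OF assms(1)])
  also have "\<dots> = (\<Sum>k\<in>{0,p}. of_nat (p choose k) * (d ^^ k) x * (d ^^ (p - k)) y)"
  proof (intro sum.mono_neutral_right ballI)
    fix k assume "k \<in> {..p} - {0, p}"
    hence k: "k > 0" "k < p" by auto
    have "p dvd (p choose k)"
      by (rule dvd_choose_prime) (use k assms(2) in auto)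
    then obtain m where "p choose k = p * m" by blast
    hence "of_nat (p choose k) = (0 :: 'a)" using assms(3) by simp
    thus "of_nat (p choose k) * (d ^^ k) x * (d ^^ (p - k)) y = 0" by simp
  qed auto
  finally show ?thesis using p0 by (simp add: add_ac)
qed


lemma map_poly_commute_pderiv:
  assumes "der d"
  shows "map_poly d (pderiv q) = pderiv (map_poly d q)"
proof -
  have d0: "d 0 = 0" using assms by (rule der_0)
  show ?thesis
    by (rule poly_eqI) (simp add: coeff_map_poly d0 coeff_pderiv der_of_nat_mult[OF assms] del: of_nat_Suc)
qed

lemma der_D2: "der (D2 :: 'k::field poly3 \<Rightarrow> _)"
  unfolding D2_def by (intro der_map_poly der_pderiv)
lemma der_D4: "der (D4 :: 'k::field poly3 \<Rightarrow> _)"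
  unfolding D4_def by (intro der_map_poly der_pderiv)
lemma der_D6: "der (D6 :: 'k::field poly3 \<Rightarrow> _)"
  unfolding D6_def by (intro der_map_poly der_pderiv)

lemma D4_D6: "D4 (D6 f) = D6 (D4 (f :: 'k::field poly3))"
  unfolding D4_def D6_def by (rule map_poly_commute_pderiv[OF der_pderiv])

lemma D2_D6: "D2 (D6 f) = D6 (D2 (f :: 'k::field poly3))"
  unfolding D2_def D6_def by (rule map_poly_commute_pderiv[OF der_map_poly[OF der_pderiv]])

lemma D2_D4: "D2 (D4 f) = D4 (D2 (f :: 'k::field poly3))"
  unfolding D2_def D4_def
  by (simp add: map_poly_map_poly o_def map_poly_commute_pderiv[OF der_pderiv])

lemma C3_simps:
  "C3 0 = 0" "C3 1 = 1" "C3 (x + y) = C3 x + C3 y" "C3 (x * y) = C3 x * C3 y"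
  "C3 (- x) = - C3 x" "C3 (x - y) = C3 x - C3 y"
  "C3 (of_nat n) = of_nat n" "C3 (numeral m) = numeral m"
  by (simp_all add: C3_def of_nat_poly numeral_poly pCons_one)

lemma D_consts:
  "D2 (C3 c) = 0" "D4 (C3 c) = 0" "D6 (C3 c) = 0"
  "D2 E2 = 1" "D4 E2 = 0" "D6 E2 = 0"
  "D2 E4 = 0" "D4 E4 = 1" "D6 E4 = 0"
  "D2 E6 = 0" "D4 E6 = 0" "D6 E6 = 1"
  by (simp_all add: C3_def D2_def D4_def D6_def E2_def E4_def E6_def map_poly_pCons pderiv_pCons pCons_one map_poly_1)

lemmas D2_rules = der_add[OF der_D2] der_mult[OF der_D2] der_diff[OF der_D2] der_uminus[OF der_D2]
  der_numeral[OF der_D2] der_of_nat[OF der_D2] der_1[OF der_D2] der_0[OF der_D2]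
lemmas D4_rules = der_add[OF der_D4] der_mult[OF der_D4] der_diff[OF der_D4] der_uminus[OF der_D4]
  der_numeral[OF der_D4] der_of_nat[OF der_D4] der_1[OF der_D4] der_0[OF der_D4]
lemmas D6_rules = der_add[OF der_D6] der_mult[OF der_D6] der_diff[OF der_D6] der_uminus[OF der_D6]
  der_numeral[OF der_D6] der_of_nat[OF der_D6] der_1[OF der_D6] der_0[OF der_D6]

lemma D_pow:
  "D2 (x ^ Suc n) = of_nat (Suc n) * x ^ n * D2 x"
  "D4 (x ^ Suc n) = of_nat (Suc n) * x ^ n * D4 x"
  "D6 (x ^ Suc n) = of_nat (Suc n) * x ^ n * D6 (x :: 'k::field poly3)"
  by (simp_all only: der_power[OF der_D2] der_power[OF der_D4] der_power[OF der_D6])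

definition Hop :: "'k::field poly3 \<Rightarrow> 'k poly3" where
  "Hop f = 2 * E2 * D2 f + 4 * E4 * D4 f + 6 * E6 * D6 f"

lemma der_Hop: "der Hop"
  unfolding Hop_def[abs_def]
  by (intro der_plus der_lin1 der_D2 der_D4 der_D6)

lemma der_ramanujan: "der ramanujan"
  unfolding ramanujan_def[abs_def]
  by (intro der_plus der_lin1 der_D2 der_D4 der_D6)


locale chp =
  fixes p :: nat and ty :: "'k::field itself"
  assumes charp: "CHAR('k) = p" and prime_p: "prime p" and p5: "p \<ge> 5"
begin

lemma of_nat_k_0_iff: "(of_nat n :: 'k) = 0 \<longleftrightarrow> p dvd n"
  using of_nat_eq_0_iff_char_dvd[where 'a='k] charp by simp

lemma small_nz: "(2::'k) \<noteq> 0" "(3::'k) \<noteq> 0" "(12::'k) \<noteq> 0" "(4::'k) \<noteq> 0" "(6::'k) \<noteq> 0"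
proof -
  have pd: "\<not> p dvd n" if "0 < n" "n < 5" for n
    using p5 that by (auto dest: dvd_imp_le)
  have n12: "\<not> p dvd 12"
  proof
    assume h: "p dvd 12"
    have "p dvd 4 \<or> p dvd 3" using prime_dvd_mult_iff[OF prime_p, of 4 3] h by simp
    then show False using pd[of 4] pd[of 3] by auto
  qed
  have n6: "\<not> p dvd 6"
  proof
    assume h: "p dvd 6"
    have "p dvd 2 \<or> p dvd 3" using prime_dvd_mult_iff[OF prime_p, of 2 3] h by simp
    then show False using pd[of 2] pd[of 3] by auto
  qed
  show "(2::'k) \<noteq> 0" using of_nat_k_0_iff[of 2] pd[of 2] by simp
  show "(3::'k) \<noteq> 0" using of_nat_k_0_iff[of 3] pd[of 3] by simp
  show "(4::'k) \<noteq> 0" using of_nat_k_0_iff[of 4] pd[of 4] by simp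
  show "(12::'k) \<noteq> 0" using of_nat_k_0_iff[of 12] n12 by simp
  show "(6::'k) \<noteq> 0" using of_nat_k_0_iff[of 6] n6 by simp
qed

lemma C3_eq_0_iff: "C3 c = 0 \<longleftrightarrow> c = 0"
  by (simp add: C3_def)

lemma of_nat_p_poly3: "(of_nat p :: 'k poly3) = 0"
proof -
  have "(of_nat p :: 'k poly3) = C3 (of_nat p)" by (simp add: C3_simps)
  also have "\<dots> = 0" using of_nat_k_0_iff[of p] by (simp add: C3_def)
  finally show ?thesis .
qed

lemma inv_const_gen:
  assumes "(numeral n :: 'k) \<noteq> 0"
  shows "numeral n * C3 (inverse (numeral n)) = (1 :: 'k poly3)"
proof -
  have "(numeral n :: 'k) * inverse (numeral n) = 1" using assms by simp
  then have "C3 ((numeral n :: 'k) * inverse (numeral n)) = 1" by (simp only: C3_simps)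
  then show ?thesis by (simp only: C3_simps(4) C3_simps(8))
qed

lemma inv_consts:
  "12 * C3 (inverse 12) = (1 :: 'k poly3)"
  "3 * C3 (inverse 3) = (1 :: 'k poly3)"
  "2 * C3 (inverse 2) = (1 :: 'k poly3)"
  "4 * C3 (inverse 4) = (1 :: 'k poly3)"
  using inv_const_gen small_nz by auto

lemma nz12: "(12 :: 'k poly3) \<noteq> 0"
proof -
  have a: "C3 (12::'k) \<noteq> 0" using small_nz by (simp add: C3_eq_0_iff)
  have b: "C3 (12::'k) = 12" by (simp only: C3_simps)
  from a b show ?thesis by simp
qed

lemma cancel12: "12 * x = 12 * y \<Longrightarrow> x = (y :: 'k poly3)"
proof -
  assume "12 * x = 12 * y"
  then show ?thesis using nz12 by simp
qed

lemma R12: "12 * ramanujan f = (E2^2 - E4) * D2 f + 4 * (E2*E4 - E6) * D4 f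
    + 6 * (E2*E6 - E4^2) * D6 (f :: 'k poly3)"
  unfolding ramanujan_def using inv_consts by algebra

lemma comm_D2: "12 * D2 (ramanujan f) = 12 * ramanujan (D2 f) + Hop (f :: 'k poly3)"
proof -
  have "12 * D2 (ramanujan f) = D2 (12 * ramanujan f)"
    by (simp add: D2_rules)
  also have "\<dots> = 12 * ramanujan (D2 f) + Hop f"
    unfolding R12 Hop_def
    by (simp add: D2_rules D_consts power2_eq_square D2_D4 D2_D6 algebra_simps)
  finally show ?thesis .
qed

lemma comm_H: "Hop (ramanujan f) = ramanujan (Hop f) + 2 * ramanujan (f :: 'k poly3)"
proof (rule cancel12)
  have "12 * Hop (ramanujan f) = Hop (12 * ramanujan f)"
    by (simp add: der_mult[OF der_Hop] der_numeral[OF der_Hop])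
  also have "\<dots> = 12 * ramanujan (Hop f) + 2 * (12 * ramanujan f)"
    unfolding R12 Hop_def
    by (simp add: D2_rules D4_rules D6_rules D_consts power2_eq_square D2_D4 D2_D6 D4_D6 algebra_simps)
  finally show "12 * Hop (ramanujan f) = 12 * (ramanujan (Hop f) + 2 * ramanujan f)"
    by (simp add: algebra_simps)
qed

end


definition good :: "(int \<Rightarrow> 'a::comm_ring_1 \<Rightarrow> bool) \<Rightarrow> bool" where
  "good Q \<longleftrightarrow> (\<forall>w. Q w 0) \<and> Q 0 1 \<and> (\<forall>w x y. Q w x \<longrightarrow> Q w y \<longrightarrow> Q w (x + y))
     \<and> (\<forall>w x. Q w x \<longrightarrow> Q w (- x)) \<and> (\<forall>u v x y. Q u x \<longrightarrow> Q v y \<longrightarrow> Q (u + v) (x * y))"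

definition gr :: "(int \<Rightarrow> 'a::comm_ring_1 \<Rightarrow> bool) \<Rightarrow> int \<Rightarrow> int \<Rightarrow> 'a poly \<Rightarrow> bool" where
  "gr Q d w f \<longleftrightarrow> (\<forall>k. Q (w - d * int k) (coeff f k))"

definition gr0 :: "int \<Rightarrow> 'a::field \<Rightarrow> bool" where
  "gr0 w x \<longleftrightarrow> (x \<noteq> 0 \<longrightarrow> w = 0)"

lemma goodD:
  assumes "good Q"
  shows "Q w 0" "Q 0 1" "Q w x \<Longrightarrow> Q w y \<Longrightarrow> Q w (x + y)" "Q w x \<Longrightarrow> Q w (- x)"
    "Q u x \<Longrightarrow> Q v y \<Longrightarrow> Q (u + v) (x * y)"
  using assms unfolding good_def by blast+

lemma good_diff: "good Q \<Longrightarrow> Q w x \<Longrightarrow> Q w y \<Longrightarrow> Q w (x - y)"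
  using goodD(3)[of Q w x "-y"] goodD(4)[of Q w y] by simp

lemma good_mult': "good Q \<Longrightarrow> Q u x \<Longrightarrow> Q v y \<Longrightarrow> w = u + v \<Longrightarrow> Q w (x * y)"
  using goodD(5) by blast

lemma good_sum: "good Q \<Longrightarrow> (\<And>i. i \<in> A \<Longrightarrow> Q w (f i)) \<Longrightarrow> Q w (sum f A)"
  by (induction A rule: infinite_finite_induct) (auto intro: goodD)

lemma good_of_nat: "good Q \<Longrightarrow> Q 0 (of_nat n)"
  by (induction n) (auto intro: goodD)

lemma good_gr0: "good (gr0 :: int \<Rightarrow> 'a::field \<Rightarrow> bool)"
  unfolding good_def gr0_def by auto

lemma good_gr:
  assumes "good Q"
  shows "good (gr Q d)"
proof -
  have z: "gr Q d w 0" for w using goodD(1)[OF assms] by (simp add: gr_def)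
  have o: "gr Q d 0 1"
    unfolding gr_def using goodD(1,2)[OF assms] by (auto simp: coeff_1)
  have a: "gr Q d w (x + y)" if "gr Q d w x" "gr Q d w y" for w x y
    using that goodD(3)[OF assms] by (simp add: gr_def)
  have n: "gr Q d w (- x)" if "gr Q d w x" for w x
    using that goodD(4)[OF assms] by (simp add: gr_def)
  have m: "gr Q d (u + v) (x * y)" if "gr Q d u x" "gr Q d v y" for u v x y
    unfolding gr_def
  proof
    fix k
    show "Q (u + v - d * int k) (coeff (x * y) k)"
      unfolding coeff_mult
    proof (rule good_sum[OF assms])
      fix i assume "i \<in> {..k}"
      then have ik: "i \<le> k" by simp
      have "Q ((u - d * int i) + (v - d * int (k - i))) (coeff x i * coeff y (k - i))"
        using that goodD(5)[OF assms] by (simp add: gr_def)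
      moreover have "(u - d * int i) + (v - d * int (k - i)) = u + v - d * int k"
        using ik by (simp add: of_nat_diff algebra_simps)
      ultimately show "Q (u + v - d * int k) (coeff x i * coeff y (k - i))" by simp
    qed
  qed
  show ?thesis unfolding good_def using z o a n m by blast
qed

lemma gr_X: "good Q \<Longrightarrow> gr Q d d [:0, 1:]"
  unfolding gr_def using goodD(1,2)
  by (auto simp: coeff_pCons split: nat.splits)

lemma gr_const: "good Q \<Longrightarrow> Q w c \<Longrightarrow> gr Q d w [:c:]"
  unfolding gr_def using goodD(1)
  by (auto simp: coeff_pCons split: nat.splits)

lemma gr_pderiv:
  assumes "good Q" "gr Q d w f"
  shows "gr Q d (w - d) (pderiv f)"
  unfolding gr_def
proof
  fix k
  have h1: "Q (w - d * int (Suc k)) (coeff f (Suc k))" using assms(2) by (simp only: gr_def)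
  have h2: "Q 0 (of_nat (Suc k))" by (rule good_of_nat[OF assms(1)])
  have "Q (0 + (w - d * int (Suc k))) (of_nat (Suc k) * coeff f (Suc k))"
    by (rule goodD(5)[OF assms(1) h2 h1])
  moreover have "0 + (w - d * int (Suc k)) = w - d - d * int k" by (simp add: algebra_simps)
  ultimately show "Q (w - d - d * int k) (coeff (pderiv f) k)"
    by (simp only: coeff_pderiv)
qed

lemma gr_map:
  assumes "\<And>w x. Q w x \<Longrightarrow> Q' (w + e) (h x)" "h 0 = 0" "gr Q d w f"
  shows "gr Q' d (w + e) (map_poly h f)"
  using assms unfolding gr_def by (simp add: coeff_map_poly algebra_simps)
    (metis add.commute add_diff_eq)

lemma gr_cong: "gr Q d u f \<Longrightarrow> u = v \<Longrightarrow> gr Q d v f"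
  by simp

abbreviation W1 :: "int \<Rightarrow> 'k::field poly \<Rightarrow> bool" where "W1 \<equiv> gr gr0 2"
abbreviation W2 :: "int \<Rightarrow> 'k::field poly poly \<Rightarrow> bool" where "W2 \<equiv> gr W1 4"
abbreviation W3 :: "int \<Rightarrow> 'k::field poly3 \<Rightarrow> bool" where "W3 \<equiv> gr W2 6"

lemma good_W1: "good (W1 :: int \<Rightarrow> 'k::field poly \<Rightarrow> bool)"
  by (intro good_gr good_gr0)
lemma good_W2: "good (W2 :: int \<Rightarrow> 'k::field poly poly \<Rightarrow> bool)"
  by (intro good_gr good_W1)
lemma good_W3: "good (W3 :: int \<Rightarrow> 'k::field poly3 \<Rightarrow> bool)"
  by (intro good_gr good_W2)

lemma W3_E2: "W3 2 (E2 :: 'k::field poly3)"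
  unfolding E2_def by (intro gr_const good_W2 gr_const good_W1 gr_X good_gr0)
lemma W3_E4: "W3 4 (E4 :: 'k::field poly3)"
  unfolding E4_def by (intro gr_const good_W2 gr_X good_W1)
lemma W3_E6: "W3 6 (E6 :: 'k::field poly3)"
  unfolding E6_def by (intro gr_X good_W2)
lemma W3_C3: "W3 0 (C3 c :: 'k::field poly3)"
  unfolding C3_def by (intro gr_const good_W2 good_W1 good_gr0) (simp add: gr0_def)

lemma W1_pderiv: "W1 w x \<Longrightarrow> W1 (w + - 2) (pderiv (x :: 'k::field poly))"
  using gr_pderiv[OF good_gr0, of 2 w x] by simp

lemma W2_D2: "W2 w x \<Longrightarrow> W2 (w + - 2) (map_poly pderiv (x :: 'k::field poly poly))"
  by (rule gr_map[where h=pderiv and Q=W1 and Q'=W1 and e="-2", OF W1_pderiv]) simp_all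

lemma W3_D2: "W3 w f \<Longrightarrow> W3 (w - 2) (D2 (f :: 'k::field poly3))"
  unfolding D2_def using gr_map[where h="map_poly pderiv" and Q=W2 and Q'=W2 and e="-2", OF W2_D2, of 6 w f]
  by simp

lemma W2_pderiv: "W2 w x \<Longrightarrow> W2 (w + - 4) (pderiv (x :: 'k::field poly poly))"
  using gr_pderiv[OF good_W1, of 4 w x] by simp

lemma W3_D4: "W3 w f \<Longrightarrow> W3 (w - 4) (D4 (f :: 'k::field poly3))"
  unfolding D4_def using gr_map[where h="pderiv" and Q=W2 and Q'=W2 and e="-4", OF W2_pderiv, of 6 w f]
  by simp

lemma W3_D6: "W3 w f \<Longrightarrow> W3 (w - 6) (D6 (f :: 'k::field poly3))"
  unfolding D6_def by (rule gr_pderiv[OF good_W2])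

lemma W3_mult: "W3 u x \<Longrightarrow> W3 v y \<Longrightarrow> w = u + v \<Longrightarrow> W3 w (x * (y :: 'k::field poly3))"
  using good_mult'[OF good_W3] by blast
lemma W3_add: "W3 w x \<Longrightarrow> W3 w y \<Longrightarrow> W3 w (x + (y :: 'k::field poly3))"
  using goodD(3)[OF good_W3] by blast
lemma W3_diff: "W3 w x \<Longrightarrow> W3 w y \<Longrightarrow> W3 w (x - (y :: 'k::field poly3))"
  using good_diff[OF good_W3] by blast

lemma W3_ramanujan:
  assumes "W3 w (f :: 'k::field poly3)"
  shows "W3 (w + 2) (ramanujan f)"
proof -
  have e22: "W3 4 (E2^2 :: 'k poly3)" unfolding power2_eq_square
    by (rule W3_mult[OF W3_E2 W3_E2]) simp
  have e42: "W3 8 (E4^2 :: 'k poly3)" unfolding power2_eq_square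
    by (rule W3_mult[OF W3_E4 W3_E4]) simp
  have e24: "W3 6 (E2 * E4 :: 'k poly3)" by (rule W3_mult[OF W3_E2 W3_E4]) simp
  have e26: "W3 8 (E2 * E6 :: 'k poly3)" by (rule W3_mult[OF W3_E2 W3_E6]) simp
  have t1: "W3 (w + 2) (C3 (inverse 12) * (E2^2 - E4) * D2 f)"
    by (rule W3_mult[OF W3_mult[OF W3_C3 W3_diff[OF e22 W3_E4]] W3_D2[OF assms]]) simp_all
  have t2: "W3 (w + 2) (C3 (inverse 3) * (E2 * E4 - E6) * D4 f)"
    by (rule W3_mult[OF W3_mult[OF W3_C3 W3_diff[OF e24 W3_E6]] W3_D4[OF assms]]) simp_all
  have t3: "W3 (w + 2) (C3 (inverse 2) * (E2 * E6 - E4^2) * D6 f)"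
    by (rule W3_mult[OF W3_mult[OF W3_C3 W3_diff[OF e26 e42]] W3_D6[OF assms]]) simp_all
  show ?thesis unfolding ramanujan_def by (rule W3_add[OF W3_add[OF t1 t2] t3])
qed

lemma W3_ramanujan_pow:
  assumes "W3 w (f :: 'k::field poly3)"
  shows "W3 (w + 2 * int n) ((ramanujan ^^ n) f)"
proof (induction n)
  case 0
  show ?case using assms by (simp only: funpow_0 of_nat_0 mult_zero_right add_0_right)
next
  case (Suc n)
  have "W3 (w + 2 * int n + 2) (ramanujan ((ramanujan ^^ n) f))"
    by (rule W3_ramanujan[OF Suc.IH])
  then have "W3 (w + 2 * int n + 2) ((ramanujan ^^ Suc n) f)"
    by (simp only: funpow.simps o_apply)
  then show ?case by (rule gr_cong) simp
qed

lemma W3_coeff: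
  assumes "W3 w (f :: 'k::field poly3)" "coeff (coeff (coeff f k) j) i \<noteq> 0"
  shows "w = 6 * int k + 4 * int j + 2 * int i"
proof -
  have "gr0 (w - 6 * int k - 4 * int j - 2 * int i) (coeff (coeff (coeff f k) j) i)"
    using assms(1) by (simp only: gr_def)
  then have "w - 6 * int k - 4 * int j - 2 * int i = 0" using assms(2) by (simp add: gr0_def)
  then show ?thesis by linarith
qed


definition Dl :: "'k::field poly3 \<Rightarrow> 'k poly3" where
  "Dl f = 4 * E6 * D4 f + 6 * E4^2 * D6 f"
definition Eop :: "'k::field poly3 \<Rightarrow> 'k poly3" where
  "Eop f = 4 * E4 * D4 f + 6 * E6 * D6 f"

lemma der_Dl: "der Dl"
  unfolding Dl_def[abs_def] by (intro der_plus der_lin1 der_D4 der_D6)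
lemma der_Eop: "der Eop"
  unfolding Eop_def[abs_def] by (intro der_plus der_lin1 der_D4 der_D6)

lemmas R_rules = der_add[OF der_ramanujan] der_mult[OF der_ramanujan] der_diff[OF der_ramanujan]
  der_numeral[OF der_ramanujan] der_of_nat[OF der_ramanujan] der_1[OF der_ramanujan]
  der_0[OF der_ramanujan]

context chp
begin

lemma Rpow_H: "Hop ((ramanujan ^^ n) f) = (ramanujan ^^ n) (Hop f) + 2 * of_nat n * (ramanujan ^^ n) (f :: 'k poly3)"
proof (induction n)
  case 0 then show ?case by simp
next
  case (Suc n)
  have "Hop ((ramanujan ^^ Suc n) f) = ramanujan (Hop ((ramanujan ^^ n) f)) + 2 * ramanujan ((ramanujan ^^ n) f)"
    by (simp add: comm_H)
  also have "\<dots> = (ramanujan ^^ Suc n) (Hop f) + 2 * of_nat (Suc n) * (ramanujan ^^ Suc n) f"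
    unfolding Suc by (simp add: R_rules algebra_simps)
  finally show ?case .
qed

lemma funpow_R_swap: "(ramanujan ^^ n) (ramanujan g) = (ramanujan ^^ Suc n) g"
  by (simp only: funpow_Suc_right o_apply)

lemma Rpow_D2: "12 * D2 ((ramanujan ^^ Suc n) f) = 12 * (ramanujan ^^ Suc n) (D2 f)
   + of_nat (Suc n) * (ramanujan ^^ n) (Hop f) + of_nat (Suc n) * of_nat n * (ramanujan ^^ n) (f :: 'k poly3)"
proof (induction n arbitrary: f)
  case 0 then show ?case by (simp add: comm_D2)
next
  case (Suc n)
  let ?R = ramanujan
  have e0: "(?R ^^ Suc (Suc n)) f = (?R ^^ Suc n) (?R f)" by (simp only: funpow_R_swap)
  have e1: "12 * (?R ^^ Suc n) (D2 (?R f)) = 12 * (?R ^^ Suc (Suc n)) (D2 f) + (?R ^^ Suc n) (Hop f)"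
  proof -
    have "12 * (?R ^^ Suc n) (D2 (?R f)) = (?R ^^ Suc n) (12 * D2 (?R f))"
      by (simp add: der_funpow_const[OF der_ramanujan] R_rules)
    also have "\<dots> = (?R ^^ Suc n) (12 * ?R (D2 f) + Hop f)" by (simp add: comm_D2)
    also have "\<dots> = 12 * (?R ^^ Suc n) (?R (D2 f)) + (?R ^^ Suc n) (Hop f)"
      by (simp add: der_funpow_add[OF der_ramanujan] der_funpow_const[OF der_ramanujan] R_rules)
    finally show ?thesis by (simp only: funpow_R_swap)
  qed
  have e2: "(?R ^^ n) (Hop (?R f)) = (?R ^^ Suc n) (Hop f) + 2 * (?R ^^ Suc n) f"
    by (simp add: comm_H der_funpow_add[OF der_ramanujan] der_funpow_const[OF der_ramanujan] R_rules
        funpow_R_swap)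
  have e3: "(?R ^^ n) (?R f) = (?R ^^ Suc n) f" by (rule funpow_R_swap)
  have "12 * D2 ((?R ^^ Suc (Suc n)) f) = 12 * (?R ^^ Suc n) (D2 (?R f))
      + of_nat (Suc n) * (?R ^^ n) (Hop (?R f)) + of_nat (Suc n) * of_nat n * (?R ^^ n) (?R f)"
    unfolding e0 by (rule Suc.IH)
  also have "\<dots> = 12 * (?R ^^ Suc (Suc n)) (D2 f) + (?R ^^ Suc n) (Hop f)
      + of_nat (Suc n) * ((?R ^^ Suc n) (Hop f) + 2 * (?R ^^ Suc n) f)
      + of_nat (Suc n) * of_nat n * (?R ^^ Suc n) f"
    unfolding e1 e2 e3 ..
  also have "\<dots> = 12 * (?R ^^ Suc (Suc n)) (D2 f) + of_nat (Suc (Suc n)) * (?R ^^ Suc n) (Hop f)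
      + of_nat (Suc (Suc n)) * of_nat (Suc n) * (?R ^^ Suc n) f"
    by (simp add: algebra_simps)
  finally show ?case .
qed

lemma p_Suc: "p = Suc (p - 1)"
  using p5 by simp

lemma Rp_D2: "D2 ((ramanujan ^^ p) f) = (ramanujan ^^ p) (D2 (f :: 'k poly3))"
proof -
  have "12 * D2 ((ramanujan ^^ Suc (p - 1)) f) = 12 * (ramanujan ^^ Suc (p - 1)) (D2 f)
    + of_nat (Suc (p - 1)) * (ramanujan ^^ (p - 1)) (Hop f)
    + of_nat (Suc (p - 1)) * of_nat (p - 1) * (ramanujan ^^ (p - 1)) f"
    by (rule Rpow_D2)
  then have "12 * D2 ((ramanujan ^^ p) f) = 12 * (ramanujan ^^ p) (D2 f)"
    using of_nat_p_poly3 by (simp only: p_Suc[symmetric]) simp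
  then show ?thesis by (rule cancel12)
qed

lemma der_Rp: "der (ramanujan ^^ p :: 'k poly3 \<Rightarrow> 'k poly3)"
  unfolding der_def
  using der_funpow_add[OF der_ramanujan] der_pow_prime[OF der_ramanujan prime_p of_nat_p_poly3]
  by blast

lemmas Rp_rules = der_add[OF der_Rp] der_mult[OF der_Rp] der_diff[OF der_Rp]
  der_numeral[OF der_Rp] der_of_nat[OF der_Rp] der_1[OF der_Rp] der_0[OF der_Rp]

abbreviation aa :: "'k poly3" where "aa \<equiv> (ramanujan ^^ p) E2"
abbreviation bb :: "'k poly3" where "bb \<equiv> (ramanujan ^^ p) E4"
abbreviation cc :: "'k poly3" where "cc \<equiv> (ramanujan ^^ p) E6"

lemma D2_abc: "D2 aa = 0" "D2 bb = 0" "D2 cc = 0"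
  by (simp_all add: Rp_D2 D_consts Rp_rules)

lemma Hop_E: "Hop E2 = (2 :: 'k poly3) * E2" "Hop E4 = (4 :: 'k poly3) * E4" "Hop E6 = (6 :: 'k poly3) * E6"
  by (simp_all add: Hop_def D_consts)

lemma Hop_abc: "Hop aa = 2 * aa" "Hop bb = 4 * bb" "Hop cc = 6 * cc"
  by (simp_all add: Rpow_H Hop_E of_nat_p_poly3 der_funpow_const[OF der_ramanujan] R_rules)

lemma Eop_abc: "Eop aa = 2 * aa" "Eop bb = 4 * bb" "Eop cc = 6 * cc"
  using Hop_abc D2_abc by (simp_all add: Hop_def Eop_def)

lemma Rform:
  assumes "D2 f = 0"
  shows "12 * ramanujan f = E2 * Hop f - Dl (f :: 'k poly3)"
proof -
  have "12 * ramanujan f = (E2^2 - E4) * D2 f + 4 * (E2*E4 - E6) * D4 f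
    + 6 * (E2*E6 - E4^2) * D6 f" by (rule R12)
  then show ?thesis by (simp add: assms Hop_def Dl_def algebra_simps)
qed

lemma R12_E: "12 * ramanujan E2 = (E2^2 - E4 :: 'k poly3)"
  "12 * ramanujan E4 = (4 * (E2 * E4 - E6) :: 'k poly3)"
  "12 * ramanujan E6 = (6 * (E2 * E6 - E4^2) :: 'k poly3)"
  by (simp_all add: R12 D_consts)

lemma Rp_comm: "12 * ramanujan ((ramanujan ^^ p) x) = (ramanujan ^^ p) (12 * ramanujan (x :: 'k poly3))"
  by (simp add: der_funpow_const[OF der_ramanujan] R_rules funpow_swap1)

lemma constr1: "Dl aa = bb"
proof -
  have "12 * ramanujan aa = (ramanujan ^^ p) (E2^2 - E4)" by (simp only: Rp_comm R12_E)
  also have "\<dots> = 2 * E2 * aa - bb" by (simp add: Rp_rules power2_eq_square)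
  finally have "12 * ramanujan aa = 2 * E2 * aa - bb" .
  moreover have "12 * ramanujan aa = E2 * (2 * aa) - Dl aa" using Rform[OF D2_abc(1)] Hop_abc by simp
  ultimately show ?thesis by algebra
qed

lemma constr2: "Dl bb = 4 * cc - 4 * aa * E4"
proof -
  have "12 * ramanujan bb = (ramanujan ^^ p) (4 * (E2 * E4 - E6))" by (simp only: Rp_comm R12_E)
  also have "\<dots> = 4 * (aa * E4 + E2 * bb - cc)" by (simp add: Rp_rules)
  finally have "12 * ramanujan bb = 4 * (aa * E4 + E2 * bb - cc)" .
  moreover have "12 * ramanujan bb = E2 * (4 * bb) - Dl bb" using Rform[OF D2_abc(2)] Hop_abc by simp
  ultimately show ?thesis by algebra
qed

lemma constr3: "Dl cc = 12 * E4 * bb - 6 * E6 * aa"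
proof -
  have "12 * ramanujan cc = (ramanujan ^^ p) (6 * (E2 * E6 - E4^2))" by (simp only: Rp_comm R12_E)
  also have "\<dots> = 6 * (aa * E6 + E2 * cc - 2 * E4 * bb)" by (simp add: Rp_rules power2_eq_square algebra_simps)
  finally have "12 * ramanujan cc = 6 * (aa * E6 + E2 * cc - 2 * E4 * bb)" .
  moreover have "12 * ramanujan cc = E2 * (6 * cc) - Dl cc" using Rform[OF D2_abc(3)] Hop_abc by simp
  ultimately show ?thesis by algebra
qed

lemma Dl_E: "Dl E4 = (4 :: 'k poly3) * E6" "Dl E6 = (6 :: 'k poly3) * E4^2" "Dl E2 = (0 :: 'k poly3)"
  by (simp_all add: Dl_def D_consts)

lemma constr4: "Dl (Dl bb) = 44 * E4 * bb - 40 * E6 * aa"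
proof -
  have "Dl (Dl bb) = 4 * Dl cc - 4 * (Dl aa * E4 + aa * Dl E4)"
    by (simp add: constr2 der_diff[OF der_Dl] der_mult[OF der_Dl] der_numeral[OF der_Dl])
  also have "\<dots> = 44 * E4 * bb - 40 * E6 * aa"
    by (simp add: constr3 constr1 Dl_E algebra_simps)
  finally show ?thesis .
qed

end


definition rhom :: "('a::comm_ring_1 \<Rightarrow> 'b::comm_ring_1) \<Rightarrow> bool" where
  "rhom h \<longleftrightarrow> (\<forall>x y. h (x + y) = h x + h y) \<and> (\<forall>x y. h (x * y) = h x * h y) \<and> h 1 = 1"

lemma rhom_add: "rhom h \<Longrightarrow> h (x + y) = h x + h y" unfolding rhom_def by blast
lemma rhom_mult: "rhom h \<Longrightarrow> h (x * y) = h x * h y" unfolding rhom_def by blast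
lemma rhom_1: "rhom h \<Longrightarrow> h 1 = 1" unfolding rhom_def by blast
lemma rhom_0: "rhom h \<Longrightarrow> h 0 = 0" using rhom_add[of h 0 0] by simp
lemma rhom_uminus: "rhom h \<Longrightarrow> h (- x) = - h x"
  using rhom_add[of h x "-x"] rhom_0[of h] by (simp add: eq_neg_iff_add_eq_0 add.commute)
lemma rhom_diff: "rhom h \<Longrightarrow> h (x - y) = h x - h y"
  using rhom_add[of h x "-y"] rhom_uminus[of h y] by simp
lemma rhom_of_nat: "rhom h \<Longrightarrow> h (of_nat n) = of_nat n"
  by (induction n) (simp_all add: rhom_0 rhom_add rhom_1)
lemma rhom_numeral: "rhom h \<Longrightarrow> h (numeral n) = numeral n"
  using rhom_of_nat[of h "numeral n"] by simp
lemma rhom_power: "rhom h \<Longrightarrow> h (x ^ n) = h x ^ n"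
  by (induction n) (simp_all add: rhom_1 rhom_mult)
lemma rhom_sum: "rhom h \<Longrightarrow> h (sum f A) = (\<Sum>a\<in>A. h (f a))"
  by (induction A rule: infinite_finite_induct) (simp_all add: rhom_0 rhom_add)

lemmas rhom_simps = rhom_add rhom_mult rhom_1 rhom_0 rhom_uminus rhom_diff rhom_of_nat
  rhom_numeral rhom_power

lemma rhom_poly: "rhom (\<lambda>q. poly q x)"
  unfolding rhom_def by simp

lemma rhom_map_poly:
  assumes "rhom h"
  shows "rhom (map_poly h)"
proof -
  have h0: "h 0 = 0" by (rule rhom_0[OF assms])
  have A: "map_poly h (x + y) = map_poly h x + map_poly h y" for x y
    by (rule poly_eqI) (simp add: coeff_map_poly h0 rhom_add[OF assms])
  have M: "map_poly h (x * y) = map_poly h x * map_poly h y" for x y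
    by (rule poly_eqI) (simp add: coeff_map_poly h0 coeff_mult rhom_sum[OF assms] rhom_mult[OF assms])
  have O: "map_poly h 1 = 1" using rhom_1[OF assms] by simp
  show ?thesis unfolding rhom_def using A M O by blast
qed

lemma rhom_comp: "rhom f \<Longrightarrow> rhom g \<Longrightarrow> rhom (\<lambda>x. f (g x))"
  unfolding rhom_def by simp

lemma map_poly_pderiv_hom:
  assumes "rhom h"
  shows "map_poly h (pderiv q) = pderiv (map_poly h q)"
  by (rule poly_eqI)
    (simp add: coeff_map_poly rhom_0[OF assms] coeff_pderiv rhom_mult[OF assms]
      rhom_of_nat[OF assms] del: of_nat_Suc)

definition Sx :: "'k::field \<Rightarrow> 'k poly3 \<Rightarrow> 'k poly poly" where
  "Sx x f = map_poly (map_poly (\<lambda>q. poly q x)) f"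
definition Ty :: "'k::field \<Rightarrow> 'k poly poly \<Rightarrow> 'k poly" where
  "Ty y g = map_poly (\<lambda>q. poly q y) g"

lemma eval3_Sx_Ty: "eval3 f x y z = poly (Ty y (Sx x f)) z"
  by (simp add: eval3_def Sx_def Ty_def)

lemma rhom_eval3: "rhom (\<lambda>f. eval3 f x y z)"
  unfolding eval3_def
  by (rule rhom_comp[OF rhom_poly rhom_comp[OF rhom_map_poly[OF rhom_poly]
      rhom_map_poly[OF rhom_map_poly[OF rhom_poly]]]])

lemmas eval3_simps = rhom_simps[OF rhom_eval3]

lemma eval3_E: "eval3 E2 x y z = x" "eval3 E4 x y z = y" "eval3 E6 x y z = z"
  "eval3 (C3 c) x y z = c"
  by (simp_all add: eval3_def E2_def E4_def E6_def C3_def map_poly_pCons)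

lemma rhom_Sx: "rhom (Sx x)"
  unfolding Sx_def[abs_def] by (intro rhom_map_poly rhom_poly)

lemma Sx_D6: "Sx x (D6 f) = pderiv (Sx x f)"
  unfolding Sx_def D6_def by (rule map_poly_pderiv_hom[OF rhom_map_poly[OF rhom_poly]])

lemma Sx_D4: "Sx x (D4 f) = map_poly pderiv (Sx x f)"
  unfolding Sx_def D4_def
  by (simp add: map_poly_map_poly o_def map_poly_pderiv_hom[OF rhom_poly])

lemma Ty_pderiv: "Ty y (pderiv g) = pderiv (Ty y g)"
  unfolding Ty_def by (rule map_poly_pderiv_hom[OF rhom_poly])

lemma Sx_D6_pow: "Sx x ((D6 ^^ j) f) = (pderiv ^^ j) (Sx x f)"
  by (induction j) (simp_all add: Sx_D6)

lemma Sx_D4_pow: "Sx x ((D4 ^^ j) f) = (map_poly pderiv ^^ j) (Sx x f)"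
  by (induction j) (simp_all add: Sx_D4)

lemma Ty_pderiv_pow: "Ty y ((pderiv ^^ j) g) = (pderiv ^^ j) (Ty y g)"
  by (induction j) (simp_all add: Ty_pderiv)

lemma eval3_D_pow: "eval3 ((D6 ^^ j) ((D4 ^^ i) f)) x y z
    = poly ((pderiv ^^ j) (Ty y ((map_poly pderiv ^^ i) (Sx x f)))) z"
  by (simp add: eval3_Sx_Ty Sx_D6_pow Sx_D4_pow Ty_pderiv_pow)

lemma coeff_pderiv_pow: "coeff ((pderiv ^^ j) g) n = pochhammer (of_nat (Suc n)) j * coeff g (n + j)"
proof (induction j arbitrary: g)
  case 0 then show ?case by simp
next
  case (Suc j)
  have "coeff ((pderiv ^^ Suc j) g) n = coeff ((pderiv ^^ j) (pderiv g)) n"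
    by (simp only: funpow_Suc_right o_apply)
  also have "\<dots> = pochhammer (of_nat (Suc n)) j * (of_nat (Suc (n + j)) * coeff g (Suc (n + j)))"
    by (simp only: Suc coeff_pderiv)
  also have "\<dots> = pochhammer (of_nat (Suc n)) (Suc j) * coeff g (n + Suc j)"
    by (simp only: pochhammer_Suc) (simp add: algebra_simps)
  finally show ?case .
qed

lemma pderiv_pow_pcompose: "(pderiv ^^ j) (pcompose f [:y, 1:]) = pcompose ((pderiv ^^ j) f) [:y, 1:]"
  by (induction j) (simp_all add: pderiv_pcompose pderiv_pCons)

context chp
begin

lemma fact_nz: "j < p \<Longrightarrow> (pochhammer (of_nat (Suc 0)) j :: 'k) \<noteq> 0"
proof -
  assume "j < p"
  then have "\<not> p dvd fact j" using prime_dvd_fact_iff[OF prime_p] by simp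
  then have "(of_nat (fact j) :: 'k) \<noteq> 0" using of_nat_k_0_iff by simp
  moreover have "(pochhammer (of_nat (Suc 0)) j :: 'k) = of_nat (fact j)"
    by (simp only: pochhammer_of_nat pochhammer_fact[where 'a=nat] One_nat_def[symmetric])
  ultimately show ?thesis by simp
qed

lemma taylor1:
  fixes f :: "'k poly"
  assumes "degree f < p" "\<And>j. poly ((pderiv ^^ j) f) y = 0"
  shows "f = 0"
proof -
  define g where "g = pcompose f [:y, 1:]"
  have dg: "degree g = degree f" by (simp add: g_def degree_pcompose)
  have "coeff g j = 0" for j
  proof (cases "j < p")
    case True
    have "coeff ((pderiv ^^ j) g) 0 = poly ((pderiv ^^ j) g) 0" by (simp add: poly_0_coeff_0)
    also have "\<dots> = poly ((pderiv ^^ j) f) y"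
      by (simp add: g_def pderiv_pow_pcompose poly_pcompose)
    also have "\<dots> = 0" by (rule assms(2))
    finally have "pochhammer (of_nat (Suc 0)) j * coeff g j = 0"
      by (simp only: coeff_pderiv_pow add_0_left)
    then show ?thesis using fact_nz[OF True] by simp
  next
    case False
    then show ?thesis using assms(1) dg by (simp add: coeff_eq_0)
  qed
  then have "g = 0" by (simp add: poly_eq_iff)
  then show ?thesis unfolding g_def by (rule pcompose_eq_0) simp
qed

lemma taylor2:
  fixes A :: "'k poly poly"
  assumes "degree A < p" "\<And>k. degree (coeff A k) < p"
    "\<And>i j. poly ((pderiv ^^ j) (Ty y ((map_poly pderiv ^^ i) A))) z = 0"
  shows "A = 0"
proof -
  have B: "Ty y ((map_poly pderiv ^^ i) A) = 0" for i
  proof (rule taylor1[OF _ assms(3)])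
    have "degree ((map_poly pderiv ^^ i) A) \<le> degree A"
      by (induction i) (auto intro: order.trans[OF map_poly_degree_leq])
    then show "degree (Ty y ((map_poly pderiv ^^ i) A)) < p"
      unfolding Ty_def using assms(1) by (meson le_less_trans map_poly_degree_leq)
  qed
  have cm: "coeff ((map_poly pderiv ^^ i) A) k = (pderiv ^^ i) (coeff A k)" for i k
    by (induction i) (simp_all add: coeff_map_poly)
  have "coeff A k = 0" for k
  proof (rule taylor1[OF assms(2)])
    fix i
    have "coeff (Ty y ((map_poly pderiv ^^ i) A)) k = 0" using B by simp
    then show "poly ((pderiv ^^ i) (coeff A k)) y = 0"
      by (simp add: Ty_def coeff_map_poly cm)
  qed
  then show ?thesis by (simp add: poly_eq_iff)
qed

end


definition DD :: "'k::field poly3" where "DD = E4^3 - E6^2"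

lemma D_DD: "D2 DD = (0 :: 'k::field poly3)" "D4 DD = (3 * E4^2 :: 'k::field poly3)"
  "D6 DD = (- 2 * E6 :: 'k::field poly3)"
  by (simp_all add: DD_def D4_rules D6_rules D2_rules D_consts power2_eq_square power3_eq_cube
      algebra_simps)

lemma Eop_Dl: "Eop (Dl f) = Dl (Eop f) + 2 * Dl (f :: 'k::field poly3)"
  by (simp add: Eop_def Dl_def D4_rules D6_rules D_consts D4_D6 power2_eq_square algebra_simps)

lemma D_pow_DD: "DD * D (DD ^ i) = of_nat i * DD ^ i * D DD" if "der D" for D :: "'k::field poly3 \<Rightarrow> _"
proof (cases i)
  case 0 then show ?thesis by (simp add: der_1[OF that])
next
  case (Suc m)
  have "D (DD ^ Suc m) = of_nat (Suc m) * DD ^ m * D DD" by (rule der_power[OF that])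
  then show ?thesis unfolding Suc by (simp add: algebra_simps)
qed

lemma leibniz_eval:
  fixes d :: "'a::comm_ring_1 \<Rightarrow> 'a" and ev :: "'a \<Rightarrow> 'b::field"
  assumes "der d" "rhom ev" "ev u \<noteq> 0" "\<And>j. ev ((d ^^ j) (u * g)) = 0"
  shows "ev ((d ^^ j) g) = 0"
proof (induction j rule: less_induct)
  case (less j)
  have "ev ((d ^^ j) (u * g)) = (\<Sum>k\<le>j. ev (of_nat (j choose k) * (d ^^ k) u * (d ^^ (j - k)) g))"
    by (simp add: der_leibniz[OF assms(1)] rhom_sum[OF assms(2)])
  also have "\<dots> = ev u * ev ((d ^^ j) g)"
  proof (cases j)
    case 0 then show ?thesis by (simp add: rhom_simps[OF assms(2)])
  next
    case (Suc m)
    have "(\<Sum>k\<le>j. ev (of_nat (j choose k) * (d ^^ k) u * (d ^^ (j - k)) g))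
      = ev (of_nat (j choose 0) * (d ^^ 0) u * (d ^^ (j - 0)) g)
        + (\<Sum>k\<le>m. ev (of_nat (j choose Suc k) * (d ^^ Suc k) u * (d ^^ (j - Suc k)) g))"
      unfolding Suc by (rule sum.atMost_Suc_shift)
    also have "(\<Sum>k\<le>m. ev (of_nat (j choose Suc k) * (d ^^ Suc k) u * (d ^^ (j - Suc k)) g)) = 0"
    proof (rule sum.neutral, rule ballI)
      fix k assume "k \<in> {..m}"
      have "ev ((d ^^ (j - Suc k)) g) = 0" using Suc by (intro less) auto
      then show "ev (of_nat (j choose Suc k) * (d ^^ Suc k) u * (d ^^ (j - Suc k)) g) = 0"
        by (simp add: rhom_simps[OF assms(2)])
    qed
    finally show ?thesis by (simp add: rhom_simps[OF assms(2)])
  qed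
  finally have "ev u * ev ((d ^^ j) g) = 0" using assms(4) by simp
  then show ?case using assms(3) by simp
qed

context chp
begin

definition inN :: "'k poly3 \<Rightarrow> bool" where
  "inN f \<longleftrightarrow> (\<exists>u v w. f = u * aa + v * bb + w * Dl bb)"

lemma inN_add: "inN f \<Longrightarrow> inN g \<Longrightarrow> inN (f + g)"
  unfolding inN_def
  by (elim exE, rule_tac x="u + ua" in exI, rule_tac x="v + va" in exI, rule_tac x="w + wa" in exI)
     (simp add: algebra_simps)

lemma inN_mult: "inN f \<Longrightarrow> inN (g * f)"
  unfolding inN_def
  by (elim exE, rule_tac x="g * u" in exI, rule_tac x="g * v" in exI, rule_tac x="g * w" in exI)
     (simp add: algebra_simps)

lemma inN_uminus: "inN f \<Longrightarrow> inN (- f)"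
  using inN_mult[of f "-1"] by simp

lemma inN_diff: "inN f \<Longrightarrow> inN g \<Longrightarrow> inN (f - g)"
  using inN_add[of f "-g"] inN_uminus[of g] by simp

lemma inN_aa: "inN aa"
  unfolding inN_def by (rule exI[of _ 1], rule exI[of _ 0], rule exI[of _ 0]) simp

lemma Dl_rules: "Dl (x + y) = Dl x + Dl y" "Dl (x * y) = Dl x * y + x * Dl y"
  "Dl (x - y) = Dl x - Dl y" "Dl (numeral n) = 0"
  by (simp_all add: der_add[OF der_Dl] der_mult[OF der_Dl] der_diff[OF der_Dl] der_numeral[OF der_Dl])

lemma Eop_rules: "Eop (x + y) = Eop x + Eop y" "Eop (x * y) = Eop x * y + x * Eop y"
  "Eop (x - y) = Eop x - Eop y" "Eop (numeral n) = 0"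
  by (simp_all add: der_add[OF der_Eop] der_mult[OF der_Eop] der_diff[OF der_Eop] der_numeral[OF der_Eop])

lemma inN_Dl: "inN f \<Longrightarrow> inN (Dl f)"
proof -
  assume "inN f"
  then obtain u v w where f: "f = u * aa + v * bb + w * Dl bb" unfolding inN_def by blast
  have "Dl f = (Dl u - 40 * E6 * w) * aa + (u + Dl v + 44 * E4 * w) * bb + (v + Dl w) * Dl bb"
    unfolding f by (simp add: Dl_rules constr1 constr4 algebra_simps)
  then show ?thesis unfolding inN_def by blast
qed

lemma Eop_bb': "Eop (Dl bb) = 6 * Dl bb"
  by (simp add: Eop_Dl Eop_abc Dl_rules)

lemma inN_Eop: "inN f \<Longrightarrow> inN (Eop f)"
proof -
  assume "inN f"
  then obtain u v w where f: "f = u * aa + v * bb + w * Dl bb" unfolding inN_def by blast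
  have "Eop f = (Eop u + 2 * u) * aa + (Eop v + 4 * v) * bb + (Eop w + 6 * w) * Dl bb"
    unfolding f by (simp add: Eop_rules Eop_abc Eop_bb' algebra_simps)
  then show ?thesis unfolding inN_def by blast
qed

lemma inN_D4: "inN f \<Longrightarrow> inN (DD * D4 f)"
proof -
  assume h: "inN f"
  have "4 * (DD * D4 f) = E4^2 * Eop f - E6 * Dl f"
    by (simp add: DD_def Eop_def Dl_def algebra_simps power2_eq_square power3_eq_cube)
  then have "DD * D4 f = C3 (inverse 4) * (E4^2 * Eop f - E6 * Dl f)"
    using inv_consts(4) by (metis (no_types, lifting) mult.assoc mult.commute mult_1_left)
  then show ?thesis using h by (simp add: inN_mult inN_diff inN_Eop inN_Dl)
qed

lemma inN_D6: "inN f \<Longrightarrow> inN (DD * D6 f)"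
proof -
  assume h: "inN f"
  have "2 * (3 * (DD * D6 f)) = E4 * Dl f - E6 * Eop f"
    by (simp add: DD_def Eop_def Dl_def algebra_simps power2_eq_square power3_eq_cube)
  then have "DD * D6 f = C3 (inverse 2) * (C3 (inverse 3) * (E4 * Dl f - E6 * Eop f))"
    using inv_consts(2,3) by (metis (no_types, lifting) mult.assoc mult.commute mult_1_left)
  then show ?thesis using h by (simp add: inN_mult inN_diff inN_Eop inN_Dl)
qed

lemma inN_D_pow:
  assumes "der D" "\<And>f. inN f \<Longrightarrow> inN (DD * D f)" "inN f"
  shows "inN (DD ^ i * (D ^^ i) f)"
proof (induction i)
  case 0 then show ?case using assms(3) by simp
next
  case (Suc i)
  let ?g = "DD ^ i * (D ^^ i) f"
  have "DD * D ?g = of_nat i * DD ^ i * D DD * (D ^^ i) f + DD ^ Suc i * (D ^^ Suc i) f"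
    by (simp add: der_mult[OF assms(1)] D_pow_DD[OF assms(1)] algebra_simps)
  then have "DD ^ Suc i * (D ^^ Suc i) f = DD * D ?g - (of_nat i * D DD) * ?g"
    by (simp add: algebra_simps)
  then show ?case using assms(2)[OF Suc] inN_mult[OF Suc] by (simp add: inN_diff)
qed

end


lemma coeff_D2: "coeff (coeff (coeff (D2 f) k) j) i
    = of_nat (Suc i) * coeff (coeff (coeff (f :: 'k::field poly3) k) j) (Suc i)"
  by (simp add: D2_def coeff_map_poly coeff_pderiv del: of_nat_Suc)

lemma coeff_nz_ex: "c \<noteq> 0 \<Longrightarrow> \<exists>j. coeff c j \<noteq> 0"
  by (metis poly_eqI coeff_0)

lemma W3_weight_k: "W3 w f \<Longrightarrow> coeff f k \<noteq> 0 \<Longrightarrow> 6 * int k \<le> w"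
proof -
  assume a: "W3 w f" "coeff f k \<noteq> 0"
  then obtain j where j: "coeff (coeff f k) j \<noteq> 0" using coeff_nz_ex by blast
  then obtain i where "coeff (coeff (coeff f k) j) i \<noteq> 0" using coeff_nz_ex by blast
  then have "w = 6 * int k + 4 * int j + 2 * int i" using W3_coeff[OF a(1)] by blast
  then show ?thesis by simp
qed

lemma W3_weight_j: "W3 w f \<Longrightarrow> coeff (coeff f k) j \<noteq> 0 \<Longrightarrow> 4 * int j \<le> w"
proof -
  assume a: "W3 w f" "coeff (coeff f k) j \<noteq> 0"
  then obtain i where "coeff (coeff (coeff f k) j) i \<noteq> 0" using coeff_nz_ex by blast
  then have "w = 6 * int k + 4 * int j + 2 * int i" using W3_coeff[OF a(1)] by blast
  then show ?thesis by simp
qed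

context chp
begin

lemma W3_aa: "W3 (2 + 2 * int p) aa"
  using W3_ramanujan_pow[OF W3_E2, of p] by simp

lemma aa_no_e2:
  assumes "i > 0"
  shows "coeff (coeff (coeff aa k) j) i = 0"
proof (rule ccontr)
  assume c: "coeff (coeff (coeff aa k) j) i \<noteq> 0"
  have w: "2 + 2 * int p = 6 * int k + 4 * int j + 2 * int i" using W3_coeff[OF W3_aa c] .
  obtain i' where i': "i = Suc i'" using assms by (cases i) auto
  have "of_nat i * coeff (coeff (coeff aa k) j) i = 0"
    using coeff_D2[of aa k j i'] D2_abc(1) i' by simp
  then have "(of_nat i :: 'k) = 0" using c by simp
  then have "p dvd i" using of_nat_k_0_iff by simp
  then obtain m where m: "i = p * m" by blast
  have "m = 1"
  proof -
    have "m \<noteq> 0" using m assms by auto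
    moreover have "m < 2"
    proof (rule ccontr)
      assume "\<not> m < 2"
      then have "i \<ge> p * 2" using m by simp
      then show False using w p5 by linarith
    qed
    ultimately show ?thesis by simp
  qed
  then have "i = p" using m by simp
  then have "6 * int k + 4 * int j = 2" using w by linarith
  then show False by presburger
qed

lemma deg_aa: "degree aa < p" "degree (coeff aa k) < p"
proof -
  show "degree aa < p"
  proof (cases "aa = 0")
    case True then show ?thesis using p5 by simp
  next
    case False
    then have "coeff aa (degree aa) \<noteq> 0" by simp
    then have "6 * int (degree aa) \<le> 2 + 2 * int p" by (rule W3_weight_k[OF W3_aa])
    then show ?thesis using p5 by linarith
  qed
  show "degree (coeff aa k) < p"
  proof (cases "coeff aa k = 0")
    case True then show ?thesis using p5 by simp
  next
    case False
    then have "coeff (coeff aa k) (degree (coeff aa k)) \<noteq> 0" by simp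
    then have "4 * int (degree (coeff aa k)) \<le> 2 + 2 * int p" by (rule W3_weight_j[OF W3_aa])
    then show ?thesis using p5 by linarith
  qed
qed

lemma Sx_aa_0_imp: "Sx x aa = 0 \<Longrightarrow> aa = 0"
proof -
  assume h: "Sx x aa = 0"
  have "coeff (coeff (coeff aa k) j) i = 0" for k j i
  proof (cases i)
    case 0
    have "coeff (coeff (Sx x aa) k) j = poly (coeff (coeff aa k) j) x"
      by (simp add: Sx_def coeff_map_poly)
    moreover have "coeff (coeff aa k) j = [:coeff (coeff (coeff aa k) j) 0:]"
      by (rule poly_eqI) (auto simp: coeff_pCons aa_no_e2 split: nat.splits)
    ultimately have "coeff (coeff (coeff aa k) j) 0 = 0" using h by (metis coeff_0 poly_pCons poly_0 mult_zero_right add_0_right)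
    then show ?thesis using 0 by simp
  next
    case (Suc m) then show ?thesis using aa_no_e2 by simp
  qed
  then show ?thesis by (simp add: poly_eq_iff)
qed

lemma eval_DD: "eval3 DD x y z = y^3 - z^2"
  by (simp add: DD_def eval3_simps eval3_E)

lemma bad_point_aa:
  assumes "eval3 aa x y z = 0" "eval3 bb x y z = 0" "eval3 cc x y z = 0" "y^3 - z^2 \<noteq> 0"
  shows "aa = 0"
proof -
  let ?ev = "\<lambda>f. eval3 f x y z"
  have evN: "?ev f = 0" if hN: "inN f" for f
  proof -
    obtain u v w where f: "f = u * aa + v * bb + w * Dl bb" using hN unfolding inN_def by blast
    have "?ev (Dl bb) = 0" using assms(1,3) by (simp add: constr2 eval3_simps)
    then show ?thesis using assms(1,2) by (simp add: f eval3_simps)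
  qed
  have evDD: "?ev (DD ^ n) \<noteq> 0" for n using assms(4) by (simp add: eval3_simps eval_DD)
  have all: "?ev ((D6 ^^ j) ((D4 ^^ i) aa)) = 0" for i j
  proof -
    have gi: "inN (DD ^ i * (D4 ^^ i) aa)"
      by (rule inN_D_pow[OF der_D4 inN_D4 inN_aa])
    have "?ev ((D6 ^^ j) (DD ^ i * (D4 ^^ i) aa)) = 0" for j
    proof -
      have "inN (DD ^ j * (D6 ^^ j) (DD ^ i * (D4 ^^ i) aa))"
        by (rule inN_D_pow[OF der_D6 inN_D6 gi])
      then have "?ev (DD ^ j * (D6 ^^ j) (DD ^ i * (D4 ^^ i) aa)) = 0" by (rule evN)
      then have "?ev (DD ^ j) * ?ev ((D6 ^^ j) (DD ^ i * (D4 ^^ i) aa)) = 0"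
        by (simp only: rhom_mult[OF rhom_eval3])
      then show ?thesis using evDD by simp
    qed
    then show ?thesis
      by (rule leibniz_eval[OF der_D6 rhom_eval3 evDD])
  qed
  have "Sx x aa = 0"
  proof (rule taylor2)
    show "degree (Sx x aa) < p"
      using deg_aa(1) unfolding Sx_def by (meson le_less_trans map_poly_degree_leq)
    show "degree (coeff (Sx x aa) k) < p" for k
      using deg_aa(2)[of k] unfolding Sx_def
      by (simp add: coeff_map_poly) (meson le_less_trans map_poly_degree_leq)
    show "poly ((pderiv ^^ j) (Ty y ((map_poly pderiv ^^ i) (Sx x aa)))) z = 0" for i j
      using all[of j i] by (simp add: eval3_D_pow)
  qed
  then show ?thesis by (rule Sx_aa_0_imp)
qed


lemma R_DD: "ramanujan DD = E2 * (DD :: 'k poly3)"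
proof (rule cancel12)
  have "12 * ramanujan DD = (E2^2 - E4) * D2 DD + 4 * (E2*E4 - E6) * D4 DD
    + 6 * (E2*E6 - E4^2) * D6 (DD :: 'k poly3)" by (rule R12)
  then show "12 * ramanujan DD = 12 * (E2 * (DD :: 'k poly3))"
    unfolding D_DD by (simp add: DD_def algebra_simps power2_eq_square power3_eq_cube)
qed

primrec Pseq :: "nat \<Rightarrow> 'k poly3" where
  "Pseq 0 = 1"
| "Pseq (Suc n) = ramanujan (Pseq n) + E2 * Pseq n"

lemma Rpow_DD: "(ramanujan ^^ n) DD = Pseq n * (DD :: 'k poly3)"
  by (induction n) (simp_all add: R_rules R_DD algebra_simps)

lemma ev1_R: "eval3 (ramanujan g) 1 1 1 = 0"
  by (simp add: ramanujan_def eval3_simps eval3_E)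

lemma ev1_P: "eval3 (Pseq n) 1 1 1 = 1"
  by (induction n) (simp_all add: eval3_simps ev1_R eval3_E)

lemma aa_nz: "aa \<noteq> 0"
proof
  assume a0: "aa = 0"
  have b0: "bb = 0" using constr1 a0 by (simp add: der_0[OF der_Dl])
  have "4 * cc = Dl bb + 4 * aa * E4" using constr2 by simp
  then have "4 * cc = 0" using a0 b0 by (simp add: der_0[OF der_Dl])
  note h4 = this
  have "cc = 1 * cc" by simp
  also have "\<dots> = (4 * C3 (inverse 4)) * cc" by (simp only: inv_consts(4))
  also have "\<dots> = C3 (inverse 4) * (4 * cc)" by (simp only: ac_simps)
  also have "\<dots> = 0" using h4 by simp
  finally have c0: "cc = 0" .
  have "(ramanujan ^^ p) (DD :: 'k poly3) = 0"
    using b0 c0 by (simp add: DD_def Rp_rules power2_eq_square power3_eq_cube)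
  then have "Pseq p * DD = 0" by (simp add: Rpow_DD)
  then have "D4 (Pseq p * DD) = D4 0" by (simp only:)
  then have "eval3 (D4 (Pseq p * DD)) 1 1 1 = 0" by (simp add: D4_rules eval3_simps)
  moreover have "eval3 (D4 (Pseq p * DD)) 1 1 1 = 3"
    by (simp add: D4_rules D_DD eval3_simps ev1_P eval_DD eval3_E)
  ultimately show False using small_nz(2) by simp
qed

lemma subset_dir:
  assumes "eval3 aa x y z = 0" "eval3 bb x y z = 0" "eval3 cc x y z = 0"
  shows "y^3 - z^2 = 0"
  using bad_point_aa[OF assms] aa_nz by blast

end


definition cB :: "'k::field \<Rightarrow> 'k poly poly" where "cB c = [:[:c:]:]"
definition Uv :: "'k::field poly poly" where "Uv = [:[:0, 1:]:]"
definition Tv :: "'k::field poly poly" where "Tv = [:0, 1:]"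
definition Sv :: "'k::field poly poly" where "Sv = Uv + Tv"
definition phi1 :: "'k::field poly \<Rightarrow> 'k poly poly" where "phi1 r = poly (map_poly cB r) Sv"
definition phi2 :: "'k::field poly poly \<Rightarrow> 'k poly poly" where
  "phi2 q = poly (map_poly phi1 q) (Tv ^ 2)"
definition Phi :: "'k::field poly3 \<Rightarrow> 'k poly poly" where
  "Phi f = poly (map_poly phi2 f) (Tv ^ 3)"

lemma rhom_cB: "rhom cB"
  unfolding rhom_def cB_def by (simp add: pCons_one)

lemma rhom_phi1: "rhom phi1"
  unfolding phi1_def[abs_def] by (rule rhom_comp[OF rhom_poly rhom_map_poly[OF rhom_cB]])
lemma rhom_phi2: "rhom phi2"
  unfolding phi2_def[abs_def] by (rule rhom_comp[OF rhom_poly rhom_map_poly[OF rhom_phi1]])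
lemma rhom_Phi: "rhom Phi"
  unfolding Phi_def[abs_def] by (rule rhom_comp[OF rhom_poly rhom_map_poly[OF rhom_phi2]])

lemmas Phi_simps = rhom_simps[OF rhom_Phi]
lemmas cB_simps = rhom_simps[OF rhom_cB]

lemma phi1_pCons: "phi1 (pCons c r) = cB c + Sv * phi1 r"
  by (simp add: phi1_def map_poly_pCons rhom_0[OF rhom_cB])
lemma phi2_pCons: "phi2 (pCons r q) = phi1 r + Tv^2 * phi2 q"
  by (simp add: phi2_def map_poly_pCons rhom_0[OF rhom_phi1])
lemma Phi_pCons: "Phi (pCons q f) = phi2 q + Tv^3 * Phi f"
  by (simp add: Phi_def map_poly_pCons rhom_0[OF rhom_phi2])

definition Vop :: "'k::field poly poly \<Rightarrow> 'k poly poly" where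
  "Vop g = cB (inverse 12) * Uv^2 * map_poly pderiv g + cB (inverse 6) * Uv * Tv * pderiv g"

lemma der_Vop: "der Vop"
  unfolding Vop_def[abs_def] by (intro der_plus der_lin1 der_map_poly der_pderiv)

lemma Vop_cB: "Vop (cB c) = 0"
  by (simp add: Vop_def cB_def map_poly_pCons)
lemma Vop_Uv: "Vop Uv = cB (inverse 12) * Uv^2"
  by (simp add: Vop_def Uv_def map_poly_pCons pderiv_pCons pCons_one)
lemma Vop_Tv: "Vop Tv = cB (inverse 6) * Uv * Tv"
  by (simp add: Vop_def Tv_def map_poly_pCons pderiv_pCons pCons_one map_poly_1)

lemmas V_rules = der_add[OF der_Vop] der_mult[OF der_Vop] der_diff[OF der_Vop] der_0[OF der_Vop]
  der_numeral[OF der_Vop] der_1[OF der_Vop]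

lemma chain1: "Vop (phi1 r) = phi1 (pderiv r) * Vop Sv"
proof (induction r)
  case 0 then show ?case by (simp add: rhom_0[OF rhom_phi1] V_rules)
next
  case (pCons c r)
  have "phi1 (pCons 0 (pderiv r)) = Sv * phi1 (pderiv r)"
    by (simp add: phi1_pCons cB_simps)
  then show ?case
    by (simp add: phi1_pCons pderiv_pCons V_rules Vop_cB pCons.IH rhom_add[OF rhom_phi1]
        algebra_simps)
qed

lemma chain2: "Vop (phi2 q) = phi2 (map_poly pderiv q) * Vop Sv + phi2 (pderiv q) * Vop (Tv^2)"
proof (induction q)
  case 0 then show ?case by (simp add: rhom_0[OF rhom_phi2] V_rules)
next
  case (pCons r q)
  have "phi2 (pCons 0 (pderiv q)) = Tv^2 * phi2 (pderiv q)"
    by (simp add: phi2_pCons rhom_0[OF rhom_phi1])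
  moreover have "map_poly pderiv (pCons r q) = pCons (pderiv r) (map_poly pderiv q)"
    by (simp add: map_poly_pCons)
  ultimately show ?case
    by (simp add: phi2_pCons pderiv_pCons V_rules chain1 pCons.IH rhom_add[OF rhom_phi2]
        algebra_simps)
qed

lemma chain3: "Vop (Phi f) = Phi (D2 f) * Vop Sv + Phi (D4 f) * Vop (Tv^2) + Phi (D6 f) * Vop (Tv^3)"
proof (induction f)
  case 0 then show ?case by (simp add: rhom_0[OF rhom_Phi] V_rules D2_rules D4_rules D6_rules)
next
  case (pCons q f)
  have "Phi (pCons 0 (D6 f)) = Tv^3 * Phi (D6 f)"
    by (simp add: Phi_pCons rhom_0[OF rhom_phi2])
  moreover have "D2 (pCons q f) = pCons (map_poly pderiv q) (D2 f)"
    by (simp add: D2_def map_poly_pCons)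
  moreover have "D4 (pCons q f) = pCons (pderiv q) (D4 f)"
    by (simp add: D4_def map_poly_pCons)
  moreover have "D6 (pCons q f) = f + pCons 0 (D6 f)"
    by (simp add: D6_def pderiv_pCons)
  ultimately show ?case
    by (simp add: Phi_pCons V_rules chain2 pCons.IH rhom_add[OF rhom_Phi] algebra_simps)
qed

lemma Phi_E: "Phi E2 = Sv" "Phi E4 = Tv^2" "Phi E6 = Tv^3" "Phi (C3 c) = cB c"
  by (simp_all add: Phi_def phi2_def phi1_def E2_def E4_def E6_def C3_def map_poly_pCons
      rhom_0[OF rhom_phi2] rhom_0[OF rhom_phi1] rhom_0[OF rhom_cB] rhom_1[OF rhom_cB])


definition Mon :: "nat \<Rightarrow> nat \<Rightarrow> 'k::field poly poly" where "Mon i j = Uv ^ i * Tv ^ j"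

lemma rhom_poly_comm: "rhom h \<Longrightarrow> h (poly q x) = poly (map_poly h q) (h x)"
  by (induction q) (simp_all add: map_poly_pCons rhom_0 rhom_add rhom_mult)

definition evB :: "'k::field \<Rightarrow> 'k \<Rightarrow> 'k poly poly \<Rightarrow> 'k" where
  "evB u0 t0 g = poly (poly g [:t0:]) u0"

lemma rhom_evB: "rhom (evB u0 t0)"
  unfolding evB_def[abs_def] by (rule rhom_comp[OF rhom_poly rhom_poly])

lemma evB_simps: "evB u0 t0 (cB c) = c" "evB u0 t0 Uv = u0" "evB u0 t0 Tv = t0"
  by (simp_all add: evB_def cB_def Uv_def Tv_def)

lemma evB_Phi: "evB u0 t0 (Phi f) = eval3 f (evB u0 t0 Sv) (evB u0 t0 (Tv^2)) (evB u0 t0 (Tv^3))"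
proof -
  let ?e = "evB u0 t0"
  have h: "rhom ?e" by (rule rhom_evB)
  have e1: "?e (phi1 r) = poly r (?e Sv)" for r
  proof -
    have "?e (phi1 r) = poly (map_poly ?e (map_poly cB r)) (?e Sv)"
      unfolding phi1_def by (rule rhom_poly_comm[OF h])
    also have "map_poly ?e (map_poly cB r) = r"
      by (simp add: map_poly_map_poly rhom_0[OF h] rhom_0[OF rhom_cB] o_def evB_simps)
    finally show ?thesis .
  qed
  have e2: "?e (phi2 q) = poly (map_poly (\<lambda>r. poly r (?e Sv)) q) (?e (Tv^2))" for q
  proof -
    have "?e (phi2 q) = poly (map_poly ?e (map_poly phi1 q)) (?e (Tv^2))"
      unfolding phi2_def by (rule rhom_poly_comm[OF h])
    also have "map_poly ?e (map_poly phi1 q) = map_poly (\<lambda>r. poly r (?e Sv)) q"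
      by (simp add: map_poly_map_poly rhom_0[OF h] rhom_0[OF rhom_phi1] o_def e1)
    finally show ?thesis .
  qed
  have "?e (Phi f) = poly (map_poly ?e (map_poly phi2 f)) (?e (Tv^3))"
    unfolding Phi_def by (rule rhom_poly_comm[OF h])
  also have "map_poly ?e (map_poly phi2 f)
      = map_poly (\<lambda>q. poly q (?e (Tv^2))) (map_poly (map_poly (\<lambda>r. poly r (?e Sv))) f)"
    by (simp add: map_poly_map_poly rhom_0[OF h] rhom_0[OF rhom_phi2] o_def e2)
  finally show ?thesis unfolding eval3_def .
qed

context chp
begin

definition i12 :: 'k where "i12 = inverse 12"

lemma inv_rel: "inverse (6::'k) = 2 * i12" "inverse (3::'k) = 4 * i12"
  "inverse (2::'k) = 6 * i12" "inverse (12::'k) = i12"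
  using small_nz by (simp_all add: field_simps i12_def)

lemma cB_inv: "cB (inverse (6::'k)) = 2 * cB i12" "cB (inverse (3::'k)) = 4 * cB i12"
  "cB (inverse (2::'k)) = 6 * cB i12" "cB (inverse (12::'k)) = cB i12"
  by (simp_all only: inv_rel cB_simps)

lemma Vop_Uv': "Vop Uv = cB i12 * (Uv :: 'k poly poly)^2"
  by (simp only: Vop_Uv cB_inv)
lemma Vop_Tv': "Vop Tv = 2 * cB i12 * Uv * (Tv :: 'k poly poly)"
  by (simp only: Vop_Tv cB_inv mult.assoc)

lemma Vop_Uv_pow: "Vop (Uv ^ i) = of_nat i * cB i12 * (Uv :: 'k poly poly) ^ Suc i"
  by (induction i) (simp_all add: V_rules Vop_Uv' algebra_simps power2_eq_square)

lemma Vop_Tv_pow: "Vop (Tv ^ j) = of_nat j * (2 * cB i12) * Uv * (Tv :: 'k poly poly) ^ j"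
  by (induction j) (simp_all add: V_rules Vop_Tv' algebra_simps)

lemma Phi_R: "Phi (ramanujan f) = Vop (Phi (f :: 'k poly3))"
proof -
  have "Phi (ramanujan f) = cB (inverse 12) * (Sv^2 - Tv^2) * Phi (D2 f)
    + cB (inverse 3) * (Sv * Tv^2 - Tv^3) * Phi (D4 f)
    + cB (inverse 2) * (Sv * Tv^3 - (Tv^2)^2) * Phi (D6 f)"
    by (simp add: ramanujan_def Phi_simps Phi_E)
  also have "\<dots> = Vop (Phi f)"
    unfolding chain3 cB_inv
    by (simp add: Sv_def V_rules Vop_Uv' Vop_Tv' power2_eq_square power3_eq_cube
        algebra_simps)
  finally show ?thesis .
qed

lemma Phi_Rpow: "Phi ((ramanujan ^^ n) f) = (Vop ^^ n) (Phi (f :: 'k poly3))"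
  by (induction n) (simp_all add: Phi_R)

lemma Vop_mon: "Vop (cB c * Mon i j) = cB (c * (of_nat (i + 2 * j) * i12)) * Mon (Suc i) (j :: nat)"
proof -
  have "cB (c * (of_nat (i + 2 * j) * i12)) = cB c * (of_nat i + 2 * of_nat j) * cB i12"
    by (simp add: cB_simps algebra_simps)
  then show ?thesis
    by (simp add: Mon_def V_rules Vop_cB Vop_Uv_pow Vop_Tv_pow algebra_simps)
qed

lemma Vop_pow_mon: "(Vop ^^ n) (cB c * Mon i j)
   = cB (c * (\<Prod>m<n. of_nat (i + 2 * j + m) * i12)) * Mon (i + n) (j :: nat)"
proof (induction n)
  case 0 then show ?case by simp
next
  case (Suc n)
  have "(Vop ^^ Suc n) (cB c * Mon i j)
      = Vop (cB (c * (\<Prod>m<n. of_nat (i + 2 * j + m) * i12)) * Mon (i + n) j)"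
    by (simp only: funpow.simps o_apply Suc.IH)
  also have "\<dots> = cB (c * (\<Prod>m<n. of_nat (i + 2 * j + m) * i12) * (of_nat (i + n + 2 * j) * i12))
      * Mon (Suc (i + n)) j"
    by (simp only: Vop_mon mult.assoc)
  also have "\<dots> = cB (c * (\<Prod>m<Suc n. of_nat (i + 2 * j + m) * i12)) * Mon (i + Suc n) j"
    by (simp add: prod.lessThan_Suc ac_simps)
  finally show ?case .
qed

lemma exists_m: "\<exists>m<p. p dvd (N + m)"
proof (cases "N mod p = 0")
  case True
  then show ?thesis using p5 by (intro exI[of _ 0]) auto
next
  case False
  define q where "q = N div p"
  define r where "r = N mod p"
  have N: "N = q * p + r" unfolding q_def r_def by simp
  have r: "r < p" unfolding r_def using p5 by simp
  have "N + (p - r) = q * p + p" using N r by linarith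
  then have "N + (p - r) = (q + 1) * p" by simp
  moreover have "p - r < p" using False p5 by (simp add: r_def)
  ultimately show ?thesis by (intro exI[of _ "p - r"]) auto
qed

lemma Vop_p_mon: "(Vop ^^ p) (Mon i j :: 'k poly poly) = 0"
proof -
  obtain m where m: "m < p" "p dvd (i + 2 * j + m)" using exists_m by blast
  have "(of_nat (i + 2 * j + m) :: 'k) = 0" using m(2) by (simp only: of_nat_k_0_iff)
  then have "(\<Prod>m<p. of_nat (i + 2 * j + m) * i12 :: 'k) = 0"
    using m(1) by (intro prod_zero) auto
  note hp = this
  have "(Vop ^^ p) (Mon i j :: 'k poly poly) = (Vop ^^ p) (cB 1 * Mon i j)"
    by (simp only: rhom_1[OF rhom_cB] mult_1_left)
  also have "\<dots> = cB (1 * (\<Prod>m<p. of_nat (i + 2 * j + m) * i12)) * Mon (i + p) j"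
    by (rule Vop_pow_mon)
  also have "\<dots> = 0" by (simp only: hp mult_1_left rhom_0[OF rhom_cB] mult_zero_left)
  finally show ?thesis .
qed

lemma Vop_p_gens: "(Vop ^^ p) (Sv :: 'k poly poly) = 0" "(Vop ^^ p) (Tv^2 :: 'k poly poly) = 0"
  "(Vop ^^ p) (Tv^3 :: 'k poly poly) = 0"
proof -
  have sv: "(Sv :: 'k poly poly) = Mon 1 0 + Mon 0 1" by (simp add: Sv_def Mon_def)
  have "(Vop ^^ p) (Sv :: 'k poly poly) = (Vop ^^ p) (Mon 1 0 + Mon 0 1)" by (simp only: sv)
  also have "\<dots> = 0" by (simp only: der_funpow_add[OF der_Vop] Vop_p_mon add_0)
  finally show "(Vop ^^ p) (Sv :: 'k poly poly) = 0" .
  have t2: "(Tv^2 :: 'k poly poly) = Mon 0 2" by (simp add: Mon_def)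
  show "(Vop ^^ p) (Tv^2 :: 'k poly poly) = 0" by (simp only: t2 Vop_p_mon)
  have t3: "(Tv^3 :: 'k poly poly) = Mon 0 3" by (simp add: Mon_def)
  show "(Vop ^^ p) (Tv^3 :: 'k poly poly) = 0" by (simp only: t3 Vop_p_mon)
qed

lemma supset_dir:
  assumes "y^3 - z^2 = (0::'k)"
  shows "eval3 aa x y z = 0 \<and> eval3 bb x y z = 0 \<and> eval3 cc x y z = 0"
proof -
  define t0 where "t0 = (if y = 0 then 0 else z / y)"
  define u0 where "u0 = x - t0"
  have yz: "y^3 = z^2" using assms by simp
  have t2: "t0^2 = y"
  proof (cases "y = 0")
    case True then show ?thesis by (simp add: t0_def)
  next
    case False
    then have "z^2 / y^2 = y^3 / y^2" using yz by simp
    also have "\<dots> = y" using False by (simp add: power2_eq_square power3_eq_cube)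
    finally show ?thesis using False by (simp add: t0_def power_divide)
  qed
  have t3: "t0^3 = z"
  proof (cases "y = 0")
    case True then have "z = 0" using yz by simp
    then show ?thesis using True by (simp add: t0_def)
  next
    case False
    have "t0^3 = t0 * t0^2" by (simp add: power3_eq_cube power2_eq_square)
    also have "\<dots> = z" using False t2 by (simp add: t0_def)
    finally show ?thesis .
  qed
  let ?e = "evB u0 t0"
  have es: "?e Sv = x" "?e (Tv^2) = y" "?e (Tv^3) = z"
    using t2 t3 by (simp_all add: Sv_def u0_def rhom_simps[OF rhom_evB] evB_simps)
  have key: "eval3 ((ramanujan ^^ p) g) x y z = ?e ((Vop ^^ p) (Phi g))" for g :: "'k poly3"
    using evB_Phi[of u0 t0 "(ramanujan ^^ p) g"] es by (simp add: Phi_Rpow)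
  show ?thesis
    by (simp add: key Phi_E Vop_p_gens rhom_0[OF rhom_evB])
qed

end


theorem corollary2p6:
  fixes p :: nat
  assumes "alg_closed_field TYPE('k::field)"
    and "CHAR('k) = p" and "prime p" and "p \<ge> 5"
  shows "{(a :: 'k, b, c).
            eval3 ((ramanujan ^^ p) E2) a b c = 0 \<and>
            eval3 ((ramanujan ^^ p) E4) a b c = 0 \<and>
            eval3 ((ramanujan ^^ p) E6) a b c = 0}
       = {(a, b, c). b ^ 3 - c ^ 2 = 0}"
proof -
  interpret chp p "TYPE('k)"
    using assms(2-4) by unfold_locales
  have key: "(eval3 ((ramanujan ^^ p) E2) a b c = 0 \<and>
            eval3 ((ramanujan ^^ p) E4) a b c = 0 \<and>
            eval3 ((ramanujan ^^ p) E6) a b c = 0) \<longleftrightarrow> b ^ 3 - c ^ 2 = (0::'k)" for a b c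
    using subset_dir[of a b c] supset_dir[of b c a] by blast
  show ?thesis using key by auto
qed

end
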